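(* Let $G$ and $H$ be connected graphs of order at least two such that neither $G$ nor $H$ is a complete graph. If $\textnormal{diam}(G\diamond H)=2$, then $O_{\rm SR}(G\diamond H)=\mathcal{B}$.
   Context: All graphs are finite, simple and undirected; $\overline{X}$ denotes the complement of $X$; $\textnormal{diam}$ denotes diameter. The modular product $G\diamond H$ has vertex set $V(G)\times V(H)$, and $(g,h)$, $(g',h')$ are adjacent iff one of the following holds: ($g=g'$ and $hh'\in E(H)$), or ($h=h'$ and $gg'\in E(G)$), or ($gg'\in E(G)$ and $hh'\in E(H)$), or ($gg'\in E(\overline{G})$ and $hh'\in E(\overline{H})$). A set $S\subseteq V(X)$ is a strong resolving set of a connected graph $X$ if for all distinct $x,y\in V(X)$ there exists $z\in S$ such that $x$ lies on a $y$–$z$ geodesic or $y$ lies on an $x$–$z$ geodesic. The Maker–Breaker strong resolving game on $X$: Maker and Breaker alternately select a not-yet-chosen vertex of $X$; Maker wins if the vertices he selects contain a strong resolving set of $X$, Breaker wins otherwise. In the M-game Maker moves first, in the B-game Breaker moves first. $O_{\rm SR}(X)=\mathcal{M}$ if Maker has a winning strategy in both games, $\mathcal{B}$ if Breaker has a winning strategy in both, and $\mathcal{N}$ if the first player has a winning strategy in each. *)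

theory Defs
  imports Main "HOL-Library.Extended_Nat"
begin

definition simple_graph :: "'a set \<Rightarrow> ('a \<Rightarrow> 'a \<Rightarrow> bool) \<Rightarrow> bool" where
  "simple_graph V E \<longleftrightarrow> finite V \<and> (\<forall>x y. E x y \<longrightarrow> x \<in> V \<and> y \<in> V)
     \<and> (\<forall>x y. E x y \<longrightarrow> E y x) \<and> (\<forall>x. \<not> E x x)"

definition gwalk :: "'a set \<Rightarrow> ('a \<Rightarrow> 'a \<Rightarrow> bool) \<Rightarrow> 'a list \<Rightarrow> bool" where
  "gwalk V E p \<longleftrightarrow> p \<noteq> [] \<and> set p \<subseteq> V \<and> (\<forall>i. Suc i < length p \<longrightarrow> E (p ! i) (p ! Suc i))"

definition gconnected :: "'a set \<Rightarrow> ('a \<Rightarrow> 'a \<Rightarrow> bool) \<Rightarrow> bool" where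
  "gconnected V E \<longleftrightarrow> V \<noteq> {} \<and>
     (\<forall>x\<in>V. \<forall>y\<in>V. \<exists>p. gwalk V E p \<and> hd p = x \<and> last p = y)"

definition complete_graph :: "'a set \<Rightarrow> ('a \<Rightarrow> 'a \<Rightarrow> bool) \<Rightarrow> bool" where
  "complete_graph V E \<longleftrightarrow> (\<forall>x\<in>V. \<forall>y\<in>V. x \<noteq> y \<longrightarrow> E x y)"

definition gdist :: "'a set \<Rightarrow> ('a \<Rightarrow> 'a \<Rightarrow> bool) \<Rightarrow> 'a \<Rightarrow> 'a \<Rightarrow> enat" where
  "gdist V E x y = (INF p \<in> {p. gwalk V E p \<and> hd p = x \<and> last p = y}. enat (length p - 1))"

definition gdiam :: "'a set \<Rightarrow> ('a \<Rightarrow> 'a \<Rightarrow> bool) \<Rightarrow> enat" where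
  "gdiam V E = (SUP x\<in>V. SUP y\<in>V. gdist V E x y)"

definition geodesic :: "'a set \<Rightarrow> ('a \<Rightarrow> 'a \<Rightarrow> bool) \<Rightarrow> 'a \<Rightarrow> 'a \<Rightarrow> 'a list \<Rightarrow> bool" where
  "geodesic V E y z p \<longleftrightarrow> gwalk V E p \<and> hd p = y \<and> last p = z
      \<and> enat (length p - 1) = gdist V E y z"

definition on_geodesic :: "'a set \<Rightarrow> ('a \<Rightarrow> 'a \<Rightarrow> bool) \<Rightarrow> 'a \<Rightarrow> 'a \<Rightarrow> 'a \<Rightarrow> bool" where
  "on_geodesic V E x y z \<longleftrightarrow> (\<exists>p. geodesic V E y z p \<and> x \<in> set p)"

definition strong_resolving_set :: "'a set \<Rightarrow> ('a \<Rightarrow> 'a \<Rightarrow> bool) \<Rightarrow> 'a set \<Rightarrow> bool" where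
  "strong_resolving_set V E S \<longleftrightarrow> S \<subseteq> V \<and>
     (\<forall>x\<in>V. \<forall>y\<in>V. x \<noteq> y \<longrightarrow>
        (\<exists>z\<in>S. on_geodesic V E x y z \<or> on_geodesic V E y x z))"

definition modprod_edge ::
  "'a set \<Rightarrow> ('a \<Rightarrow> 'a \<Rightarrow> bool) \<Rightarrow> 'b set \<Rightarrow> ('b \<Rightarrow> 'b \<Rightarrow> bool) \<Rightarrow> 'a \<times> 'b \<Rightarrow> 'a \<times> 'b \<Rightarrow> bool" where
  "modprod_edge VG EG VH EH u w \<longleftrightarrow>
     (case u of (g, h) \<Rightarrow> case w of (g', h') \<Rightarrow>
       g \<in> VG \<and> g' \<in> VG \<and> h \<in> VH \<and> h' \<in> VH \<and>
       ((g = g' \<and> EH h h') \<or> (h = h' \<and> EG g g') \<or> (EG g g' \<and> EH h h') \<or>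
        ((g \<noteq> g' \<and> \<not> EG g g') \<and> (h \<noteq> h' \<and> \<not> EH h h'))))"

text \<open>Maker--Breaker game on board X. forces X goal t P Q: the player A, who currently owns
  the set P (opponent owns Q), has a strategy guaranteeing that when the board is full
  goal P' Q' holds; t = True means A is to move.\<close>
inductive forces :: "'a set \<Rightarrow> ('a set \<Rightarrow> 'a set \<Rightarrow> bool) \<Rightarrow> bool \<Rightarrow> 'a set \<Rightarrow> 'a set \<Rightarrow> bool"
  for X goal where
  finished: "P \<union> Q = X \<Longrightarrow> goal P Q \<Longrightarrow> forces X goal t P Q"
| own_move: "v \<in> X - (P \<union> Q) \<Longrightarrow> forces X goal False (insert v P) Q \<Longrightarrow> forces X goal True P Q"
| opp_move: "P \<union> Q \<noteq> X \<Longrightarrow> (\<forall>v \<in> X - (P \<union> Q). forces X goal True P (insert v Q))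
      \<Longrightarrow> forces X goal False P Q"

definition maker_goal_SR :: "'a set \<Rightarrow> ('a \<Rightarrow> 'a \<Rightarrow> bool) \<Rightarrow> 'a set \<Rightarrow> bool" where
  "maker_goal_SR V E M \<longleftrightarrow> (\<exists>S \<subseteq> M. strong_resolving_set V E S)"

text \<open>Breaker has a winning strategy in the M-game (Maker first) and in the B-game (Breaker first).\<close>
definition breaker_wins_M_game :: "'a set \<Rightarrow> ('a \<Rightarrow> 'a \<Rightarrow> bool) \<Rightarrow> bool" where
  "breaker_wins_M_game V E \<longleftrightarrow> forces V (\<lambda>Br Mk. \<not> maker_goal_SR V E Mk) False {} {}"

definition breaker_wins_B_game :: "'a set \<Rightarrow> ('a \<Rightarrow> 'a \<Rightarrow> bool) \<Rightarrow> bool" where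
  "breaker_wins_B_game V E \<longleftrightarrow> forces V (\<lambda>Br Mk. \<not> maker_goal_SR V E Mk) True {} {}"

definition maker_wins_M_game :: "'a set \<Rightarrow> ('a \<Rightarrow> 'a \<Rightarrow> bool) \<Rightarrow> bool" where
  "maker_wins_M_game V E \<longleftrightarrow> forces V (\<lambda>Mk Br. maker_goal_SR V E Mk) True {} {}"

definition maker_wins_B_game :: "'a set \<Rightarrow> ('a \<Rightarrow> 'a \<Rightarrow> bool) \<Rightarrow> bool" where
  "maker_wins_B_game V E \<longleftrightarrow> forces V (\<lambda>Mk Br. maker_goal_SR V E Mk) False {} {}"

definition O_SR_is_B :: "'a set \<Rightarrow> ('a \<Rightarrow> 'a \<Rightarrow> bool) \<Rightarrow> bool" where
  "O_SR_is_B V E \<longleftrightarrow> breaker_wins_M_game V E \<and> breaker_wins_B_game V E"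

end

theory Submission
  imports Defs
begin

lemma win_hold:
  assumes fin: "finite X"
    and G: "\<And>P Q. x \<in> P \<Longrightarrow> y \<in> P \<Longrightarrow> x \<notin> Q \<Longrightarrow> y \<notin> Q \<Longrightarrow> P \<union> Q = X \<Longrightarrow> goal P Q"
  shows "card (X - (P \<union> Q)) = n \<Longrightarrow> x \<in> P \<Longrightarrow> y \<in> P \<Longrightarrow> x \<notin> Q \<Longrightarrow> y \<notin> Q
     \<Longrightarrow> P \<union> Q \<subseteq> X \<Longrightarrow> forces X goal t P Q"
proof (induction n arbitrary: P Q t)
  case 0
  then have "P \<union> Q = X" using fin by auto
  then show ?case using 0 G by (auto intro: forces.finished)
next
  case (Suc n)
  then have ne: "X - (P \<union> Q) \<noteq> {}" by (metis card.empty nat.simps(3))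
  have IH: "forces X goal t' P' Q'" if "v \<in> X - (P \<union> Q)" "P' \<union> Q' = insert v (P \<union> Q)"
     "x \<in> P'" "y \<in> P'" "x \<notin> Q'" "y \<notin> Q'" for v P' Q' t'
  proof (rule Suc.IH)
    have "X - (P' \<union> Q') = (X - (P \<union> Q)) - {v}" using that by auto
    then show "card (X - (P' \<union> Q')) = n" using Suc.prems(1) that(1) fin by simp
    show "P' \<union> Q' \<subseteq> X" using that Suc.prems by auto
  qed (use that in auto)
  show ?case
  proof (cases t)
    case True
    from ne obtain v where v: "v \<in> X - (P \<union> Q)" by auto
    have "forces X goal False (insert v P) Q" by (rule IH[OF v]) (use Suc.prems in auto)
    then show ?thesis using True v by (auto intro: forces.own_move)
  next
    case False
    have "forces X goal True P (insert v Q)" if v: "v \<in> X - (P \<union> Q)" for v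
      by (rule IH[OF v]) (use Suc.prems v in auto)
    moreover have "P \<union> Q \<noteq> X" using ne by auto
    ultimately show ?thesis using False by (auto intro: forces.opp_move)
  qed
qed

lemma win_hold':
  assumes fin: "finite X"
    and G: "\<And>P Q. x \<in> P \<Longrightarrow> y \<in> P \<Longrightarrow> x \<notin> Q \<Longrightarrow> y \<notin> Q \<Longrightarrow> P \<union> Q = X \<Longrightarrow> goal P Q"
    and "x \<in> P" "y \<in> P" "x \<notin> Q" "y \<notin> Q" "P \<union> Q \<subseteq> X"
  shows "forces X goal t P Q"
  by (rule win_hold[OF fin G refl assms(3-7)])

lemma step2:
  assumes fin: "finite X"
    and G: "\<And>P Q x y. R x y \<Longrightarrow> x \<in> P \<Longrightarrow> y \<in> P \<Longrightarrow> x \<notin> Q \<Longrightarrow> y \<notin> Q \<Longrightarrow> P \<union> Q = X \<Longrightarrow> goal P Q"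
    and Rab: "R a b" and Rad: "R a d" and bd: "b \<noteq> d"
    and un: "a \<notin> P \<union> Q" "b \<notin> P \<union> Q" "d \<notin> P \<union> Q" and inX: "a \<in> X" "b \<in> X" "d \<in> X"
    and sub: "P \<union> Q \<subseteq> X" and ab: "a \<noteq> b" "a \<noteq> d"
  shows "forces X goal True P Q"
proof -
  have "forces X goal False (insert a P) Q"
  proof (rule forces.opp_move)
    show "insert a P \<union> Q \<noteq> X" using un inX ab by auto
    show "\<forall>v\<in>X - (insert a P \<union> Q). forces X goal True (insert a P) (insert v Q)"
    proof
      fix v assume v: "v \<in> X - (insert a P \<union> Q)"
      show "forces X goal True (insert a P) (insert v Q)"
      proof (cases "v = b")
        case True
        have "forces X goal False (insert d (insert a P)) (insert v Q)"
          by (rule win_hold'[OF fin G[OF Rad]]) (use un inX sub v True bd ab in auto)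
        then show ?thesis using un inX True bd ab by (intro forces.own_move[of d]) auto
      next
        case False
        have "forces X goal False (insert b (insert a P)) (insert v Q)"
          by (rule win_hold'[OF fin G[OF Rab]]) (use un inX sub v False bd ab in auto)
        then show ?thesis using un inX False bd ab by (intro forces.own_move[of b]) auto
      qed
    qed
  qed
  then show ?thesis using un inX by (intro forces.own_move[of a]) auto
qed


lemma no_geo:
  assumes nE: "\<not> E y x" and xy: "x \<noteq> y" and zx: "z \<noteq> x" and d: "gdist V E y z \<le> 2"
  shows "\<not> on_geodesic V E x y z"
proof
  assume "on_geodesic V E x y z"
  then obtain p where g: "geodesic V E y z p" and xp: "x \<in> set p" unfolding on_geodesic_def by blast
  from g have w: "gwalk V E p" and h: "hd p = y" and l: "last p = z"
    and len: "enat (length p - 1) = gdist V E y z" unfolding geodesic_def by auto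
  from w have ne: "p \<noteq> []" and st: "\<forall>i. Suc i < length p \<longrightarrow> E (p ! i) (p ! Suc i)"
    unfolding gwalk_def by auto
  from xp obtain i where i: "i < length p" "p ! i = x" by (metis in_set_conv_nth)
  have p0: "p ! 0 = y" using h ne by (simp add: hd_conv_nth)
  have pl: "p ! (length p - 1) = z" using l ne by (simp add: last_conv_nth)
  have "i \<noteq> 0"
  proof
    assume "i = 0"
    then show False using p0 i xy by simp
  qed
  moreover have "i \<noteq> length p - 1" using pl i zx by auto
  moreover have "i \<noteq> 1" proof
    assume "i = 1"
    then have "E (p ! 0) (p ! 1)" using st i by auto
    then show False using nE p0 i \<open>i = 1\<close> by simp
  qed
  ultimately have "length p - 1 \<ge> 3" using i by linarith
  moreover have "enat (length p - 1) \<le> enat 2" using len d by (simp add: numeral_eq_enat)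
  then have "length p - 1 \<le> 2" by simp
  ultimately show False by linarith
qed

lemma gdist_le_diam:
  assumes "u \<in> V" "w \<in> V"
  shows "gdist V E u w \<le> gdiam V E"
  unfolding gdiam_def
  by (rule SUP_upper2[OF assms(1)], rule SUP_upper[OF assms(2)])

lemma not_srs:
  assumes xy: "x \<noteq> y" and n1: "\<not> E x y" and n2: "\<not> E y x" and inV: "x \<in> V" "y \<in> V"
    and dm: "gdiam V E = 2" and xs: "x \<notin> S" and ys: "y \<notin> S"
  shows "\<not> strong_resolving_set V E S"
proof
  assume srs: "strong_resolving_set V E S"
  then obtain z where z: "z \<in> S" and o: "on_geodesic V E x y z \<or> on_geodesic V E y x z"
    using xy inV unfolding strong_resolving_set_def by blast
  have zV: "z \<in> V" using srs z unfolding strong_resolving_set_def by auto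
  have d1: "gdist V E y z \<le> 2" using gdist_le_diam[OF inV(2) zV, of E] dm by simp
  have d2: "gdist V E x z \<le> 2" using gdist_le_diam[OF inV(1) zV, of E] dm by simp
  have "z \<noteq> x" "z \<noteq> y" using z xs ys by auto
  then show False using o no_geo[OF n2 xy _ d1] no_geo[OF n1 _ _ d2] xy by auto
qed


theorem mainTheorem17:
  fixes VG :: "'a set" and EG :: "'a \<Rightarrow> 'a \<Rightarrow> bool"
    and VH :: "'b set" and EH :: "'b \<Rightarrow> 'b \<Rightarrow> bool"
  assumes "simple_graph VG EG" and "simple_graph VH EH"
    and "gconnected VG EG" and "gconnected VH EH"
    and "card VG \<ge> 2" and "card VH \<ge> 2"
    and "\<not> complete_graph VG EG" and "\<not> complete_graph VH EH"
    and "gdiam (VG \<times> VH) (modprod_edge VG EG VH EH) = 2"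
  shows "O_SR_is_B (VG \<times> VH) (modprod_edge VG EG VH EH)"
proof -
  define X where "X = VG \<times> VH"
  define E where "E = modprod_edge VG EG VH EH"
  define goal where "goal = (\<lambda>(Br::('a \<times> 'b) set) Mk. \<not> maker_goal_SR X E Mk)"
  define R where "R = (\<lambda>u w. u \<noteq> w \<and> \<not> E u w \<and> \<not> E w u \<and> u \<in> X \<and> w \<in> X)"
  have sG: "finite VG" "\<And>x y. EG x y \<Longrightarrow> EG y x" "\<And>x. \<not> EG x x"
    using assms(1) unfolding simple_graph_def by auto
  have sH: "finite VH" "\<And>x y. EH x y \<Longrightarrow> EH y x" "\<And>x. \<not> EH x x"
    "\<And>x y. EH x y \<Longrightarrow> x \<in> VH \<and> y \<in> VH"
    using assms(2) unfolding simple_graph_def by auto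
  have fin: "finite X" unfolding X_def using sG sH by simp
  obtain g1 g2 where g: "g1 \<in> VG" "g2 \<in> VG" "g1 \<noteq> g2" "\<not> EG g1 g2"
    using assms(7) unfolding complete_graph_def by auto
  have g': "\<not> EG g2 g1" using g sG by blast
  obtain a0 where a0: "a0 \<in> VH" using assms(6) by fastforce
  have "card (VH - {a0}) \<ge> 1" using assms(6) a0 sH(1) by simp
  then have "VH - {a0} \<noteq> {}" by (metis card.empty not_one_le_zero)
  then obtain b0 where b0: "b0 \<in> VH" "b0 \<noteq> a0" by blast
  obtain p where p: "gwalk VH EH p" "hd p = a0" "last p = b0"
    using assms(4) a0 b0 unfolding gconnected_def by blast
  have pne: "p \<noteq> []" and pst: "\<forall>i. Suc i < length p \<longrightarrow> EH (p ! i) (p ! Suc i)"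
    using p(1) unfolding gwalk_def by auto
  have "length p \<noteq> 1"
  proof
    assume "length p = 1"
    then have "hd p = last p" using pne by (simp add: hd_conv_nth last_conv_nth)
    then show False using p b0 by simp
  qed
  then have "Suc 0 < length p" using pne by (cases p) auto
  then have "EH (p ! 0) (p ! 1)" using pst by auto
  then obtain h1 h2 where h: "EH h1 h2" "h1 \<in> VH" "h2 \<in> VH" using sH(4) by blast
  have h': "EH h2 h1" "h1 \<noteq> h2" using h sH by auto
  define a where "a = (g1, h1)"
  define b where "b = (g2, h1)"
  define c where "c = (g1, h2)"
  define d where "d = (g2, h2)"
  have inX: "a \<in> X" "b \<in> X" "c \<in> X" "d \<in> X" unfolding a_def b_def c_def d_def X_def using g h by auto
  have dist: "a \<noteq> b" "a \<noteq> c" "a \<noteq> d" "b \<noteq> c" "b \<noteq> d" "c \<noteq> d"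
    unfolding a_def b_def c_def d_def using g h' by auto
  have nE: "\<not> E a b" "\<not> E b a" "\<not> E b c" "\<not> E c b" "\<not> E c d" "\<not> E d c" "\<not> E d a" "\<not> E a d"
    unfolding E_def a_def b_def c_def d_def modprod_edge_def using g g' h h' sG(3) sH(3) by auto
  have Rs: "R a b" "R b a" "R b c" "R c b" "R c d" "R d c" "R d a" "R a d"
    unfolding R_def using nE dist inX by auto
  have G: "goal P Q" if "R x y" "x \<in> P" "y \<in> P" "x \<notin> Q" "y \<notin> Q" "P \<union> Q = X" for P Q x y
  proof -
    have "\<not> strong_resolving_set X E S" if "S \<subseteq> Q" for S
      by (rule not_srs[of x y]) (use \<open>R x y\<close> \<open>x \<notin> Q\<close> \<open>y \<notin> Q\<close> that assms(9) in
          \<open>auto simp: R_def X_def E_def\<close>)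
    then show ?thesis unfolding goal_def maker_goal_SR_def by auto
  qed
  have B: "forces X goal True {} {}"
    by (rule step2[where R=R and goal=goal and a=a and b=b and d=d, OF fin], rule G, assumption+) (use Rs dist inX in auto)
  have M: "forces X goal False {} {}"
  proof (rule forces.opp_move)
    show "{} \<union> {} \<noteq> X" using inX by auto
    show "\<forall>v\<in>X - ({} \<union> {}). forces X goal True {} (insert v {})"
    proof
      fix v assume v: "v \<in> X - ({} \<union> {})"
      consider "v = b" | "v = d" | "v = a" | "v \<noteq> a \<and> v \<noteq> b \<and> v \<noteq> d" by blast
      then show "forces X goal True {} (insert v {})"
      proof cases
        case 1 show ?thesis by (rule step2[where R=R and goal=goal and a=d and b=a and d=c, OF fin], rule G, assumption+) (use 1 Rs dist inX v in auto)
      next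
        case 2 show ?thesis by (rule step2[where R=R and goal=goal and a=b and b=a and d=c, OF fin], rule G, assumption+) (use 2 Rs dist inX v in auto)
      next
        case 3 show ?thesis by (rule step2[where R=R and goal=goal and a=c and b=b and d=d, OF fin], rule G, assumption+) (use 3 Rs dist inX v in auto)
      next
        case 4 show ?thesis by (rule step2[where R=R and goal=goal and a=a and b=b and d=d, OF fin], rule G, assumption+) (use 4 Rs dist inX v in auto)
      qed
    qed
  qed
  show ?thesis
    unfolding O_SR_is_B_def breaker_wins_M_game_def breaker_wins_B_game_def
    using B M unfolding goal_def X_def E_def by simp
qed

end
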